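(* Let $\iota:B\to A$ be a central homomorphism of monoids, i.e. $B$ is commutative and $\iota(b)a=a\iota(b)$ for all $a\in A$, $b\in B$. Then: (1) a map $q:A\to B$ satisfies (ZL1), (ZL2), (ZL3) if and only if $q$ is a monoid homomorphism with $q\circ\iota=\mathrm{id}_B$; (2) any two such maps $q,q'$ that are equivalent (i.e. there is an invertible $b_0\in B$ with $q(a)b_0=q'(a\,\iota(b_0))$ for all $a\in A$) are equal; hence the canonical surjection $\mathcal Z^1(\mathsf T^l_\iota,(B,m_B))\to\mathsf{Desc}^1(\mathsf T^l_\iota,(B,m_B))$ is a bijection.
   Context: Let $\iota:B\to A$ be a monoid homomorphism. $\mathcal Z^1(\mathsf T^l_\iota,(B,m_B))$ is identified with the set of maps $q:A\to B$ satisfying (ZL1) $q(1_A)=1_B$; (ZL2) $q(\iota(b)a)=b\,q(a)$ for all $a\in A,b\in B$; (ZL3) $q(aa')=q(a\,\iota(q(a')))$ for all $a,a'\in A$. (These are exactly the Eilenberg–Moore algebra structures on the left $B$-set $B$ for the monad $A\otimes_B-$ on left $B$-sets induced by $\iota$, via $h\mapsto(a\mapsto h(a\otimes 1_B))$.) Two elements $q,q'$ are equivalent if there is an invertible $b_0\in B$ with $q(a)b_0=q'(a\,\iota(b_0))$ for all $a\in A$ (equivalently, the corresponding algebras are isomorphic); $\mathsf{Desc}^1(\mathsf T^l_\iota,(B,m_B))$ is the set of equivalence classes. *)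

theory Defs
  imports "HOL-Algebra.Group" "HOL-Library.FuncSet"
begin

text \<open>Monoid homomorphisms (HOL-Algebra's hom does not require preservation of the unit).\<close>
definition mon_hom :: "('a, 'c) monoid_scheme \<Rightarrow> ('b, 'd) monoid_scheme \<Rightarrow> ('a \<Rightarrow> 'b) set" where
  "mon_hom G H = {h. h \<in> hom G H \<and> h \<one>\<^bsub>G\<^esub> = \<one>\<^bsub>H\<^esub>}"

definition ZL :: "('a, 'c) monoid_scheme \<Rightarrow> ('b, 'd) monoid_scheme \<Rightarrow> ('b \<Rightarrow> 'a) \<Rightarrow> ('a \<Rightarrow> 'b) \<Rightarrow> bool" where
  "ZL A B \<iota> q \<longleftrightarrow>
     q \<in> carrier A \<rightarrow> carrier B \<and>
     q \<one>\<^bsub>A\<^esub> = \<one>\<^bsub>B\<^esub> \<and>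
     (\<forall>a\<in>carrier A. \<forall>b\<in>carrier B. q (\<iota> b \<otimes>\<^bsub>A\<^esub> a) = b \<otimes>\<^bsub>B\<^esub> q a) \<and>
     (\<forall>a\<in>carrier A. \<forall>a'\<in>carrier A. q (a \<otimes>\<^bsub>A\<^esub> a') = q (a \<otimes>\<^bsub>A\<^esub> \<iota> (q a')))"

definition Z1 :: "('a, 'c) monoid_scheme \<Rightarrow> ('b, 'd) monoid_scheme \<Rightarrow> ('b \<Rightarrow> 'a) \<Rightarrow> ('a \<Rightarrow> 'b) set" where
  "Z1 A B \<iota> = {q \<in> carrier A \<rightarrow>\<^sub>E carrier B. ZL A B \<iota> q}"

definition ZL_equiv :: "('a, 'c) monoid_scheme \<Rightarrow> ('b, 'd) monoid_scheme \<Rightarrow> ('b \<Rightarrow> 'a) \<Rightarrow> ('a \<Rightarrow> 'b) \<Rightarrow> ('a \<Rightarrow> 'b) \<Rightarrow> bool" where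
  "ZL_equiv A B \<iota> q q' \<longleftrightarrow>
     (\<exists>b0\<in>Units B. \<forall>a\<in>carrier A. q a \<otimes>\<^bsub>B\<^esub> b0 = q' (a \<otimes>\<^bsub>A\<^esub> \<iota> b0))"

definition ZL_rel :: "('a, 'c) monoid_scheme \<Rightarrow> ('b, 'd) monoid_scheme \<Rightarrow> ('b \<Rightarrow> 'a) \<Rightarrow> (('a \<Rightarrow> 'b) \<times> ('a \<Rightarrow> 'b)) set" where
  "ZL_rel A B \<iota> = {(q, q'). q \<in> Z1 A B \<iota> \<and> q' \<in> Z1 A B \<iota> \<and> ZL_equiv A B \<iota> q q'}"

definition Desc1 :: "('a, 'c) monoid_scheme \<Rightarrow> ('b, 'd) monoid_scheme \<Rightarrow> ('b \<Rightarrow> 'a) \<Rightarrow> ('a \<Rightarrow> 'b) set set" where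
  "Desc1 A B \<iota> = Z1 A B \<iota> // ZL_rel A B \<iota>"

end

theory Submission
  imports Defs
begin

theorem proposition3p9:
  fixes A :: "('a, 'c) monoid_scheme" and B :: "('b, 'd) monoid_scheme" and \<iota> :: "'b \<Rightarrow> 'a"
  assumes "monoid A" and "comm_monoid B"
    and "\<iota> \<in> mon_hom B A"
    and central: "\<forall>a\<in>carrier A. \<forall>b\<in>carrier B. \<iota> b \<otimes>\<^bsub>A\<^esub> a = a \<otimes>\<^bsub>A\<^esub> \<iota> b"
  shows "(\<forall>q. ZL A B \<iota> q \<longleftrightarrow>
              (q \<in> mon_hom A B \<and> (\<forall>b\<in>carrier B. q (\<iota> b) = b)))
    \<and> (\<forall>q q'. ZL A B \<iota> q \<longrightarrow> ZL A B \<iota> q' \<longrightarrow> ZL_equiv A B \<iota> q q'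
              \<longrightarrow> (\<forall>a\<in>carrier A. q a = q' a))
    \<and> bij_betw (\<lambda>q. ZL_rel A B \<iota> `` {q}) (Z1 A B \<iota>) (Desc1 A B \<iota>)"
proof -
  interpret A: monoid A by fact
  interpret B: comm_monoid B by fact
  have ic: "\<And>b. b \<in> carrier B \<Longrightarrow> \<iota> b \<in> carrier A"
    and im: "\<And>x y. x \<in> carrier B \<Longrightarrow> y \<in> carrier B \<Longrightarrow> \<iota> (x \<otimes>\<^bsub>B\<^esub> y) = \<iota> x \<otimes>\<^bsub>A\<^esub> \<iota> y"
    and i1: "\<iota> \<one>\<^bsub>B\<^esub> = \<one>\<^bsub>A\<^esub>"
    using assms(3) by (auto simp: mon_hom_def hom_def)
  have P1: "ZL A B \<iota> q \<longleftrightarrow> (q \<in> mon_hom A B \<and> (\<forall>b\<in>carrier B. q (\<iota> b) = b))" for q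
  proof
    assume Z: "ZL A B \<iota> q"
    hence qc: "\<And>a. a \<in> carrier A \<Longrightarrow> q a \<in> carrier B" and q1: "q \<one>\<^bsub>A\<^esub> = \<one>\<^bsub>B\<^esub>"
      and z2: "\<And>a b. a\<in>carrier A \<Longrightarrow> b\<in>carrier B \<Longrightarrow> q (\<iota> b \<otimes>\<^bsub>A\<^esub> a) = b \<otimes>\<^bsub>B\<^esub> q a"
      and z3: "\<And>a a'. a\<in>carrier A \<Longrightarrow> a'\<in>carrier A \<Longrightarrow> q (a \<otimes>\<^bsub>A\<^esub> a') = q (a \<otimes>\<^bsub>A\<^esub> \<iota> (q a'))"
      unfolding ZL_def by (auto simp: Pi_def)
    have mul: "q (a \<otimes>\<^bsub>A\<^esub> a') = q a \<otimes>\<^bsub>B\<^esub> q a'" if "a\<in>carrier A" "a'\<in>carrier A" for a a'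
    proof -
      have "q (a \<otimes>\<^bsub>A\<^esub> a') = q (a \<otimes>\<^bsub>A\<^esub> \<iota> (q a'))" using z3 that by blast
      also have "\<dots> = q (\<iota> (q a') \<otimes>\<^bsub>A\<^esub> a)" using central that qc by auto
      also have "\<dots> = q a' \<otimes>\<^bsub>B\<^esub> q a" using z2 that qc by auto
      finally show ?thesis using B.m_comm qc that by auto
    qed
    have "q (\<iota> b) = b" if "b \<in> carrier B" for b
      using z2[of "\<one>\<^bsub>A\<^esub>" b] that ic q1 by auto
    thus "q \<in> mon_hom A B \<and> (\<forall>b\<in>carrier B. q (\<iota> b) = b)"
      using qc mul q1 by (auto simp: mon_hom_def hom_def)
  next
    assume H: "q \<in> mon_hom A B \<and> (\<forall>b\<in>carrier B. q (\<iota> b) = b)"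
    hence qc: "\<And>a. a \<in> carrier A \<Longrightarrow> q a \<in> carrier B" and q1: "q \<one>\<^bsub>A\<^esub> = \<one>\<^bsub>B\<^esub>"
      and mul: "\<And>x y. x \<in> carrier A \<Longrightarrow> y \<in> carrier A \<Longrightarrow> q (x \<otimes>\<^bsub>A\<^esub> y) = q x \<otimes>\<^bsub>B\<^esub> q y"
      and qi: "\<And>b. b\<in>carrier B \<Longrightarrow> q (\<iota> b) = b"
      by (auto simp: mon_hom_def hom_def)
    show "ZL A B \<iota> q" unfolding ZL_def
      using qc q1 by (auto simp: mul qi ic)
  qed
  have P2: "\<forall>a\<in>carrier A. q a = q' a" if Z: "ZL A B \<iota> q" "ZL A B \<iota> q'" and E: "ZL_equiv A B \<iota> q q'" for q q'
  proof
    fix a assume a: "a \<in> carrier A"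
    from E obtain b0 where b0: "b0 \<in> Units B" and eq: "\<forall>a\<in>carrier A. q a \<otimes>\<^bsub>B\<^esub> b0 = q' (a \<otimes>\<^bsub>A\<^esub> \<iota> b0)"
      unfolding ZL_equiv_def by blast
    have b0c: "b0 \<in> carrier B" using b0 by (auto simp: Units_def)
    from Z P1 have h: "q' \<in> mon_hom A B" "\<forall>b\<in>carrier B. q' (\<iota> b) = b" by auto
    hence "q' (a \<otimes>\<^bsub>A\<^esub> \<iota> b0) = q' a \<otimes>\<^bsub>B\<^esub> b0" using a b0c ic by (auto simp: mon_hom_def hom_def)
    hence "q a \<otimes>\<^bsub>B\<^esub> b0 = q' a \<otimes>\<^bsub>B\<^esub> b0" using eq a by auto
    moreover have "q a \<in> carrier B" "q' a \<in> carrier B" using Z a by (auto simp: ZL_def Pi_def)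
    ultimately show "q a = q' a" using B.Units_r_inv b0 b0c
      by (metis B.Units_inv_closed B.m_assoc B.r_one)
  qed
  have refl: "(q, q) \<in> ZL_rel A B \<iota>" if "q \<in> Z1 A B \<iota>" for q
  proof -
    have "ZL A B \<iota> q" using that by (simp add: Z1_def)
    hence "\<forall>a\<in>carrier A. q a \<otimes>\<^bsub>B\<^esub> \<one>\<^bsub>B\<^esub> = q (a \<otimes>\<^bsub>A\<^esub> \<iota> \<one>\<^bsub>B\<^esub>)"
      by (auto simp: ZL_def Pi_def i1)
    thus ?thesis using that by (auto simp: ZL_rel_def ZL_equiv_def intro!: bexI[of _ "\<one>\<^bsub>B\<^esub>"])
  qed
  have inj: "inj_on (\<lambda>q. ZL_rel A B \<iota> `` {q}) (Z1 A B \<iota>)"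
  proof (rule inj_onI)
    fix q q' assume q: "q \<in> Z1 A B \<iota>" and q': "q' \<in> Z1 A B \<iota>"
      and e: "ZL_rel A B \<iota> `` {q} = ZL_rel A B \<iota> `` {q'}"
    have "(q', q) \<in> ZL_rel A B \<iota>" using refl[OF q] e by auto
    hence "\<forall>a\<in>carrier A. q' a = q a" using P2 by (auto simp: ZL_rel_def Z1_def)
    thus "q = q'" using q q' unfolding Z1_def by (metis (no_types, lifting) PiE_ext mem_Collect_eq)
  qed
  show ?thesis using P1 P2 inj
    by (auto simp: bij_betw_def Desc1_def quotient_def)
qed

end
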